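(* In $Y_R(\mathfrak{so}_3)$: $$3e_{-1,1}(u+\tfrac12)-e_{-1,1}(u)+3e_{-1,0}(u+\tfrac12)e_{-1,0}(u)-2e_{-1,0}(u)^2=0.$$
   Context: Let $e_{ij}$ ($i,j\in\{-1,0,1\}$) be the matrix units of $\mathrm{End}\,\mathbb{C}^3$, with rows and columns indexed by $-1,0,1$. Let $P=\sum_{i,j}e_{ij}\otimes e_{ji}$, $Q=\sum_{i,j}e_{ij}\otimes e_{-i,-j}$ and $R(u)=1-\frac{P}{u}+\frac{Q}{u-\frac12}$. Let $t$ be the transposition on $\mathrm{End}\,\mathbb{C}^3$ given by $(e_{ij})^t=e_{-j,-i}$. The algebra $Y_R(\mathfrak{so}_3)$ is the unital associative algebra over $\mathbb{C}$ generated by elements $t_{ij}^{(r)}$, $r\ge 1$, $i,j\in\{-1,0,1\}$; put $t_{ij}(u)=\delta_{ij}+\sum_{r\ge1}t^{(r)}_{ij}u^{-r}$, $T(u)=\sum_{i,j}t_{ij}(u)\otimes e_{ij}$, $T^t(u)=\sum_{i,j}t_{ij}(u)\otimes e_{-j,-i}$, $T_1(u)=\sum t_{ij}(u)\otimes e_{ij}\otimes 1$, $T_2(v)=\sum t_{ij}(v)\otimes 1\otimes e_{ij}$. The defining relations are $R(u-v)T_1(u)T_2(v)=T_2(v)T_1(u)R(u-v)$ and $T(u)T^t(u+\frac12)=T^t(u+\frac12)T(u)=1$. The Gauss generators are the unique series $k_i(u)\in 1+u^{-1}Y_R(\mathfrak{so}_3)[[u^{-1}]]$ ($i=-1,0,1$)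 and $e_{ij}(u),f_{ji}(u)\in u^{-1}Y_R(\mathfrak{so}_3)[[u^{-1}]]$ ($-1\le i<j\le1$) such that $T(u)=F(u)K(u)E(u)$, where $F(u)$ is the lower unitriangular matrix with below-diagonal entries $F_{0,-1}=f_{0,-1}(u)$, $F_{1,-1}=f_{1,-1}(u)$, $F_{1,0}=f_{1,0}(u)$, $K(u)=\mathrm{diag}(k_{-1}(u),k_0(u),k_1(u))$, and $E(u)$ is the upper unitriangular matrix with above-diagonal entries $E_{-1,0}=e_{-1,0}(u)$, $E_{-1,1}=e_{-1,1}(u)$, $E_{0,1}=e_{01}(u)$ (rows/columns indexed by $-1,0,1$). *)

theory Defs
  imports Complex_Main
begin

text \<open>A unital associative C-algebra: a ring_1 type together with a unital ring
  homomorphism from the complex numbers onto central elements (the scalars).\<close>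
definition is_calg :: "(complex \<Rightarrow> 'a::ring_1) \<Rightarrow> bool" where
  "is_calg emb \<longleftrightarrow> emb 1 = 1 \<and> (\<forall>x y. emb (x + y) = emb x + emb y)
     \<and> (\<forall>x y. emb (x * y) = emb x * emb y) \<and> (\<forall>c a. emb c * a = a * emb c)"

definition idx :: "int set" where "idx = {-1, 0, 1}"

text \<open>One-variable series: F n is the coefficient of u^(-n).\<close>
definition sprod :: "(nat \<Rightarrow> 'a::ring_1) \<Rightarrow> (nat \<Rightarrow> 'a) \<Rightarrow> nat \<Rightarrow> 'a" where
  "sprod F G n = (\<Sum>a\<le>n. F a * G (n - a))"

definition sone :: "nat \<Rightarrow> 'a::ring_1" where
  "sone n = (if n = 0 then 1 else 0)"

text \<open>Substitution u \<mapsto> u + c:  coefficient of u^(-n) in  sum_r F r (u+c)^(-r).\<close>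
definition sshift :: "(complex \<Rightarrow> 'a::ring_1) \<Rightarrow> complex \<Rightarrow> (nat \<Rightarrow> 'a) \<Rightarrow> nat \<Rightarrow> 'a" where
  "sshift emb c F n = (if n = 0 then F 0 else
     (\<Sum>r\<in>{1..n}. emb ((- c) ^ (n - r) * of_nat ((n - 1) choose (n - r))) * F r))"

text \<open>The series t_ij(u) = delta_ij + sum_{r>=1} t_ij^(r) u^(-r); t i j r for r >= 1 are the generators.\<close>
definition tser :: "(int \<Rightarrow> int \<Rightarrow> nat \<Rightarrow> 'a::ring_1) \<Rightarrow> int \<Rightarrow> int \<Rightarrow> nat \<Rightarrow> 'a" where
  "tser t i j n = (if n = 0 then (if i = j then 1 else 0) else t i j n)"

text \<open>Two-variable (Laurent) series: H a b is the coefficient of u^(-a) v^(-b).\<close>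
definition Wop :: "(int \<Rightarrow> int \<Rightarrow> 'a::ring_1) \<Rightarrow> int \<Rightarrow> int \<Rightarrow> 'a" where
  "Wop H a b = H (a + 1) b - H a (b + 1)"   \<comment> \<open>multiplication by u - v\<close>

definition scal :: "(complex \<Rightarrow> 'a::ring_1) \<Rightarrow> complex \<Rightarrow> (int \<Rightarrow> int \<Rightarrow> 'a) \<Rightarrow> int \<Rightarrow> int \<Rightarrow> 'a" where
  "scal emb c H a b = emb c * H a b"

definition add2 :: "(int \<Rightarrow> int \<Rightarrow> 'a::ring_1) \<Rightarrow> (int \<Rightarrow> int \<Rightarrow> 'a) \<Rightarrow> int \<Rightarrow> int \<Rightarrow> 'a" where
  "add2 H G a b = H a b + G a b"

definition sub2 :: "(int \<Rightarrow> int \<Rightarrow> 'a::ring_1) \<Rightarrow> (int \<Rightarrow> int \<Rightarrow> 'a) \<Rightarrow> int \<Rightarrow> int \<Rightarrow> 'a" where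
  "sub2 H G a b = H a b - G a b"

text \<open>Components of T_1(u) T_2(v) and T_2(v) T_1(u) at row (i,k), column (j,l)
  of End(C^3) \<otimes> End(C^3).\<close>
definition X12 :: "(int \<Rightarrow> int \<Rightarrow> nat \<Rightarrow> 'a::ring_1) \<Rightarrow> int \<Rightarrow> int \<Rightarrow> int \<Rightarrow> int \<Rightarrow> int \<Rightarrow> int \<Rightarrow> 'a" where
  "X12 t i k j l a b = (if 0 \<le> a \<and> 0 \<le> b then tser t i j (nat a) * tser t k l (nat b) else 0)"

definition X21 :: "(int \<Rightarrow> int \<Rightarrow> nat \<Rightarrow> 'a::ring_1) \<Rightarrow> int \<Rightarrow> int \<Rightarrow> int \<Rightarrow> int \<Rightarrow> int \<Rightarrow> int \<Rightarrow> 'a" where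
  "X21 t i k j l a b = (if 0 \<le> a \<and> 0 \<le> b then tser t k l (nat b) * tser t i j (nat a) else 0)"

text \<open>RTT relation multiplied by (u-v)(u-v-1/2), i.e. with
  Rt(w) = w(w-1/2) - (w-1/2) P + w Q,  w = u - v.\<close>
definition RTT_lhs :: "(complex \<Rightarrow> 'a::ring_1) \<Rightarrow> (int \<Rightarrow> int \<Rightarrow> nat \<Rightarrow> 'a) \<Rightarrow> int \<Rightarrow> int \<Rightarrow> int \<Rightarrow> int \<Rightarrow> int \<Rightarrow> int \<Rightarrow> 'a" where
  "RTT_lhs emb t i k j l =
     add2 (add2 (sub2 (sub2 (Wop (Wop (X12 t i k j l))) (scal emb (1/2) (Wop (X12 t i k j l))))
                     (Wop (X12 t k i j l)))
                (scal emb (1/2) (X12 t k i j l)))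
          (if k = - i then Wop (\<lambda>a b. \<Sum>m\<in>idx. X12 t m (- m) j l a b) else (\<lambda>a b. 0))"

definition RTT_rhs :: "(complex \<Rightarrow> 'a::ring_1) \<Rightarrow> (int \<Rightarrow> int \<Rightarrow> nat \<Rightarrow> 'a) \<Rightarrow> int \<Rightarrow> int \<Rightarrow> int \<Rightarrow> int \<Rightarrow> int \<Rightarrow> int \<Rightarrow> 'a" where
  "RTT_rhs emb t i k j l =
     add2 (add2 (sub2 (sub2 (Wop (Wop (X21 t i k j l))) (scal emb (1/2) (Wop (X21 t i k j l))))
                     (Wop (X21 t i k l j)))
                (scal emb (1/2) (X21 t i k l j)))
          (if l = - j then Wop (\<lambda>a b. \<Sum>m\<in>idx. X21 t i k m (- m) a b) else (\<lambda>a b. 0))"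

definition RTT_rel :: "(complex \<Rightarrow> 'a::ring_1) \<Rightarrow> (int \<Rightarrow> int \<Rightarrow> nat \<Rightarrow> 'a) \<Rightarrow> bool" where
  "RTT_rel emb t \<longleftrightarrow> (\<forall>i\<in>idx. \<forall>j\<in>idx. \<forall>k\<in>idx. \<forall>l\<in>idx. \<forall>a b.
      RTT_lhs emb t i k j l a b = RTT_rhs emb t i k j l a b)"

text \<open>T(u) T^t(u+1/2) = T^t(u+1/2) T(u) = 1, where (T^t(u))_{ab} = t_{-b,-a}(u).\<close>
definition unitary_rel :: "(complex \<Rightarrow> 'a::ring_1) \<Rightarrow> (int \<Rightarrow> int \<Rightarrow> nat \<Rightarrow> 'a) \<Rightarrow> bool" where
  "unitary_rel emb t \<longleftrightarrow> (\<forall>i\<in>idx. \<forall>j\<in>idx. \<forall>n.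
      (\<Sum>k\<in>idx. sprod (tser t i k) (sshift emb (1/2) (tser t (- j) (- k))) n)
        = (if n = 0 \<and> i = j then 1 else 0)
    \<and> (\<Sum>k\<in>idx. sprod (sshift emb (1/2) (tser t (- k) (- i))) (tser t k j) n)
        = (if n = 0 \<and> i = j then 1 else 0))"

text \<open>Gauss decomposition T(u) = F(u) K(u) E(u).  kk i = k_i(u), ee i j = e_ij(u) (i<j),
  ff j i = f_ji(u) (i<j).\<close>
definition gauss_decomp :: "(int \<Rightarrow> int \<Rightarrow> nat \<Rightarrow> 'a::ring_1) \<Rightarrow> (int \<Rightarrow> nat \<Rightarrow> 'a)
     \<Rightarrow> (int \<Rightarrow> int \<Rightarrow> nat \<Rightarrow> 'a) \<Rightarrow> (int \<Rightarrow> int \<Rightarrow> nat \<Rightarrow> 'a) \<Rightarrow> bool" where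
  "gauss_decomp t kk ee ff \<longleftrightarrow>
     (\<forall>i\<in>idx. kk i 0 = 1)
   \<and> (\<forall>i\<in>idx. \<forall>j\<in>idx. i < j \<longrightarrow> ee i j 0 = 0 \<and> ff j i 0 = 0)
   \<and> (\<forall>i\<in>idx. \<forall>j\<in>idx. \<forall>n.
        tser t i j n = (\<Sum>m\<in>idx.
           sprod (sprod (if m = i then sone else if m < i then ff i m else (\<lambda>_. 0)) (kk m))
                 (if m = j then sone else if m < j then ee m j else (\<lambda>_. 0)) n))"

end

theory Submission
  imports Defs "HOL-Computational_Algebra.Formal_Power_Series"
begin

lemma calg_add: "is_calg emb \<Longrightarrow> emb (x + y) = emb x + emb y" unfolding is_calg_def by blast
lemma calg_mult: "is_calg emb \<Longrightarrow> emb (x * y) = emb x * emb y" unfolding is_calg_def by blast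
lemma calg_one: "is_calg emb \<Longrightarrow> emb 1 = 1" unfolding is_calg_def by blast
lemma calg_comm: "is_calg emb \<Longrightarrow> emb c * a = a * emb c" unfolding is_calg_def by blast
lemma calg_zero: "is_calg emb \<Longrightarrow> emb 0 = 0"
  using calg_add[of emb 0 0] by simp
lemma calg_uminus: "is_calg emb \<Longrightarrow> emb (- x) = - emb x"
proof -
  assume E: "is_calg emb"
  have "emb x + emb (-x) = 0" using calg_add[OF E, of x "-x"] calg_zero[OF E] by simp
  hence "- emb x = emb (-x)" by (rule minus_unique)
  thus ?thesis by simp
qed
lemma calg_diff: "is_calg emb \<Longrightarrow> emb (x - y) = emb x - emb y"
  using calg_add[of emb x "-y"] calg_uminus[of emb y] by simp
lemma calg_sum: "is_calg emb \<Longrightarrow> emb (sum f A) = (\<Sum>x\<in>A. emb (f x))"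
  by (induction A rule: infinite_finite_induct) (auto simp: calg_zero calg_add)
lemma calg_of_nat: "is_calg emb \<Longrightarrow> emb (of_nat n) = of_nat n"
  by (induction n) (auto simp: calg_zero calg_add calg_one)
lemma calg_numeral: "is_calg emb \<Longrightarrow> emb (numeral n) = numeral n"
  using calg_of_nat[of emb "numeral n"] by simp
lemma calg_mult_assoc: "is_calg emb \<Longrightarrow> emb x * (emb y * a) = emb (x * y) * a"
proof -
  assume E: "is_calg emb"
  have "emb x * (emb y * a) = (emb x * emb y) * a" by (simp only: mult.assoc)
  thus ?thesis by (simp only: calg_mult[OF E])
qed
lemma calg_comm2: "is_calg emb \<Longrightarrow> a * (emb c * b) = emb c * (a * b)"
proof -
  assume E: "is_calg emb"
  have "a * (emb c * b) = (a * emb c) * b" by (simp only: mult.assoc)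
  also have "a * emb c = emb c * a" by (rule calg_comm[OF E, symmetric])
  finally show ?thesis by (simp only: mult.assoc)
qed

lemma numeral_comm: "(numeral k :: 'b::ring_1) * x = x * numeral k"
  using mult_of_nat_commute[of "numeral k" x] by (simp only: of_nat_numeral)

lemma sprod_fps: "sprod F G n = fps_nth (Abs_fps F * Abs_fps G) n"
  by (simp add: sprod_def fps_mult_nth atLeast0AtMost)

lemma sone_fps: "Abs_fps sone = 1"
  by (rule fps_ext) (simp add: sone_def)

lemma zero_fps: "Abs_fps (\<lambda>_. 0) = 0"
  by (rule fps_ext) simp

lemma fps_cancel_left:
  fixes K X :: "'b::ring_1 fps"
  assumes "fps_nth K 0 = 1" "K * X = 0" shows "X = 0"
proof -
  have "fps_nth X n = 0" for n
  proof (induction n rule: less_induct)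
    case (less n)
    have "0 = fps_nth (K * X) n" using assms by simp
    also have "\<dots> = (\<Sum>i=0..n. fps_nth K i * fps_nth X (n - i))" by (rule fps_mult_nth)
    also have "\<dots> = fps_nth K 0 * fps_nth X (n-0) + (\<Sum>i\<in>{1..n}. fps_nth K i * fps_nth X (n - i))"
      by (simp add: sum.atLeast_Suc_atMost)
    also have "(\<Sum>i\<in>{1..n}. fps_nth K i * fps_nth X (n - i)) = 0"
      by (rule sum.neutral) (auto simp: less)
    finally show ?case using assms by simp
  qed
  then show ?thesis by (intro fps_ext) simp
qed

lemma fps_cancel_right:
  fixes K X :: "'b::ring_1 fps"
  assumes "fps_nth K 0 = 1" "X * K = 0" shows "X = 0"
proof -
  have "fps_nth X n = 0" for n
  proof (induction n rule: less_induct)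
    case (less n)
    have "0 = fps_nth (X * K) n" using assms by simp
    also have "\<dots> = (\<Sum>i=0..n. fps_nth X i * fps_nth K (n - i))" by (rule fps_mult_nth)
    also have "\<dots> = (\<Sum>i\<in>{0..<n}. fps_nth X i * fps_nth K (n - i)) + fps_nth X n * fps_nth K (n-n)"
      by (simp add: sum.atLeast0_atMost_Suc atLeast0AtMost atLeast0LessThan lessThan_Suc_atMost[symmetric])
    also have "(\<Sum>i\<in>{0..<n}. fps_nth X i * fps_nth K (n - i)) = 0"
      by (rule sum.neutral) (auto simp: less)
    finally show ?case using assms by simp
  qed
  then show ?thesis by (intro fps_ext) simp
qed

lemma fps_cancel_left_eq:
  fixes K X Y :: "'b::ring_1 fps"
  assumes "fps_nth K 0 = 1" "K * X = K * Y" shows "X = Y"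
  using fps_cancel_left[OF assms(1), of "X - Y"] assms(2) by (simp add: algebra_simps)

lemma fps_cancel_three:
  fixes X Y :: "'b::ring_1 fps"
  assumes E: "is_calg (emb :: complex \<Rightarrow> 'b)" and "3 * X = 3 * Y" shows "X = Y"
proof (rule fps_ext)
  fix n
  have "fps_nth (3 * X) n = fps_nth (3 * Y) n" using assms by simp
  hence "3 * fps_nth X n = 3 * fps_nth Y n" by (simp add: fps_numeral_fps_const)
  hence "emb (1/3) * (3 * fps_nth X n) = emb (1/3) * (3 * fps_nth Y n)" by simp
  moreover have "emb (1/3) * (3 * z) = z" for z :: 'b
    using calg_mult[OF E, of "1/3" 3] calg_numeral[OF E, of "num.Bit1 num.One"] calg_one[OF E]
    by (simp add: mult.assoc[symmetric])
  ultimately show "fps_nth X n = fps_nth Y n" by simp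
qed

section \<open>Shift coefficients\<close>

definition gco :: "complex \<Rightarrow> nat \<Rightarrow> nat \<Rightarrow> complex" where
  "gco c r m = (if r \<le> m then ((- of_nat r) gchoose (m - r)) * c ^ (m - r) else 0)"

lemma gco_gt: "m < r \<Longrightarrow> gco c r m = 0" by (simp add: gco_def)

lemma gco_eq:
  assumes "1 \<le> r" "r \<le> m"
  shows "(- c) ^ (m - r) * of_nat ((m - 1) choose (m - r)) = gco c r m"
proof -
  have "of_nat r + of_nat (m - r) - 1 = (of_nat (m - 1) :: complex)"
    using assms by (simp add: of_nat_diff)
  hence "((- of_nat r) gchoose (m - r)) = (-1) ^ (m - r) * (of_nat (m-1) gchoose (m - r) :: complex)"
    by (simp add: gbinomial_minus)
  moreover have "(of_nat ((m - 1) choose (m - r)) :: complex) = of_nat (m - 1) gchoose (m - r)"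
    by (rule binomial_gbinomial)
  moreover have "(- c) ^ (m - r) = (-1) ^ (m - r) * c ^ (m - r)"
    by (rule power_minus)
  ultimately show ?thesis using assms
    by (simp add: gco_def)
qed

lemma sshift_alt:
  assumes E: "is_calg emb"
  shows "sshift emb c F m = (\<Sum>r\<le>m. emb (gco c r m) * F r)"
proof (cases m)
  case 0
  then show ?thesis by (simp add: sshift_def gco_def calg_one[OF E])
next
  case (Suc m')
  have "(\<Sum>r\<le>m. emb (gco c r m) * F r) = emb (gco c 0 m) * F 0 + (\<Sum>r\<in>{1..m}. emb (gco c r m) * F r)"
    by (simp only: atMost_atLeast0 sum.atLeast_Suc_atMost[OF le0] One_nat_def)
  also have "gco c 0 m = 0" using Suc by (simp add: gco_def)
  also have "(\<Sum>r\<in>{1..m}. emb (gco c r m) * F r) = sshift emb c F m"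
  proof -
    have "emb (gco c r m) * F r = emb ((- c) ^ (m - r) * of_nat ((m - 1) choose (m - r))) * F r"
      if "r \<in> {1..m}" for r using that gco_eq[of r m c] by simp
    hence "(\<Sum>r\<in>{1..m}. emb (gco c r m) * F r) = (\<Sum>r\<in>{1..m}. emb ((- c) ^ (m - r) * of_nat ((m - 1) choose (m - r))) * F r)"
      by (rule sum.cong[OF refl])
    thus ?thesis unfolding sshift_def using Suc by simp
  qed
  finally show ?thesis by (simp add: calg_zero[OF E])
qed

lemma gco_vand: "(\<Sum>i\<le>n. gco c r i * gco c s (n - i)) = gco c (r + s) n"
proof (cases "r + s \<le> n")
  case False
  then show ?thesis
    by (auto simp: gco_def intro!: sum.neutral)
next
  case True
  define p where "p = n - r - s"
  have "(\<Sum>i\<le>n. gco c r i * gco c s (n - i)) = (\<Sum>i\<in>{0+r..p+r}. gco c r i * gco c s (n - i))"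
    using True by (intro sum.mono_neutral_right) (auto simp: p_def gco_def)
  also have "\<dots> = (\<Sum>k\<in>{0..p}. gco c r (k + r) * gco c s (n - (k + r)))"
    by (rule sum.shift_bounds_cl_nat_ivl)
  also have "\<dots> = (\<Sum>k\<in>{0..p}. ((- of_nat r) gchoose k) * ((- of_nat s) gchoose (p - k)) * c ^ p)"
  proof (rule sum.cong[OF refl])
    fix k assume k: "k \<in> {0..p}"
    have e: "n - (k + r) - s = p - k" using k by (simp add: p_def)
    have "c ^ k * c ^ (p - k) = c ^ p" using k by (simp add: power_add[symmetric])
    thus "gco c r (k + r) * gco c s (n - (k + r)) = ((- of_nat r) gchoose k) * ((- of_nat s) gchoose (p - k)) * c ^ p"
      using k True e by (simp add: gco_def p_def algebra_simps)
  qed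
  also have "\<dots> = ((- of_nat r + - of_nat s) gchoose p) * c ^ p"
    by (simp add: sum_distrib_right[symmetric] gbinomial_Vandermonde)
  also have "\<dots> = gco c (r + s) n"
    using True by (simp add: gco_def p_def algebra_simps)
  finally show ?thesis .
qed

definition Sh :: "(complex \<Rightarrow> 'a::ring_1) \<Rightarrow> complex \<Rightarrow> 'a fps \<Rightarrow> 'a fps" where
  "Sh emb c F = Abs_fps (sshift emb c (fps_nth F))"

lemma Sh_nth0: "fps_nth (Sh emb c F) 0 = fps_nth F 0"
  by (simp add: Sh_def sshift_def)

lemma Sh_nth: "is_calg emb \<Longrightarrow> fps_nth (Sh emb c F) n = (\<Sum>r\<le>n. emb (gco c r n) * fps_nth F r)"
  by (simp add: Sh_def sshift_alt)

lemma Sh_add: "is_calg emb \<Longrightarrow> Sh emb c (F + G) = Sh emb c F + Sh emb c G"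
  by (rule fps_ext) (simp add: Sh_nth sum.distrib distrib_left)

lemma Sh_mult:
  assumes E: "is_calg emb"
  shows "Sh emb c (F * G) = Sh emb c F * Sh emb c G"
proof (rule fps_ext)
  fix n
  define h where "h = (\<lambda>r s. emb (gco c (r + s) n) * (fps_nth F r * fps_nth G s))"
  have "fps_nth (Sh emb c (F * G)) n = (\<Sum>m\<le>n. emb (gco c m n) * (\<Sum>r\<le>m. fps_nth F r * fps_nth G (m - r)))"
    by (simp add: Sh_nth[OF E] fps_mult_nth atLeast0AtMost)
  also have "\<dots> = (\<Sum>m\<le>n. \<Sum>r\<le>m. h r (m - r))"
    by (rule sum.cong[OF refl]) (auto simp: h_def sum_distrib_left intro!: sum.cong)
  also have "\<dots> = (\<Sum>(r, s)\<in>{(r, s). r + s \<le> n}. h r s)"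
    by (rule sum.triangle_reindex_eq[symmetric])
  finally have L: "fps_nth (Sh emb c (F * G)) n = (\<Sum>(r, s)\<in>{(r, s). r + s \<le> n}. h r s)" .
  have "fps_nth (Sh emb c F * Sh emb c G) n
      = (\<Sum>i\<le>n. (\<Sum>r\<le>i. emb (gco c r i) * fps_nth F r) * (\<Sum>s\<le>n - i. emb (gco c s (n - i)) * fps_nth G s))"
    by (simp add: Sh_nth[OF E] fps_mult_nth atLeast0AtMost)
  also have "\<dots> = (\<Sum>i\<le>n. (\<Sum>r\<le>n. emb (gco c r i) * fps_nth F r) * (\<Sum>s\<le>n. emb (gco c s (n - i)) * fps_nth G s))"
  proof (rule sum.cong[OF refl])
    fix i assume i: "i \<in> {..n}"
    have 1: "(\<Sum>r\<le>i. emb (gco c r i) * fps_nth F r) = (\<Sum>r\<le>n. emb (gco c r i) * fps_nth F r)"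
      using i by (intro sum.mono_neutral_left) (auto simp: gco_gt calg_zero[OF E])
    have 2: "(\<Sum>s\<le>n - i. emb (gco c s (n - i)) * fps_nth G s) = (\<Sum>s\<le>n. emb (gco c s (n - i)) * fps_nth G s)"
      using i by (intro sum.mono_neutral_left) (auto simp: gco_gt calg_zero[OF E])
    show "(\<Sum>r\<le>i. emb (gco c r i) * fps_nth F r) * (\<Sum>s\<le>n - i. emb (gco c s (n - i)) * fps_nth G s)
        = (\<Sum>r\<le>n. emb (gco c r i) * fps_nth F r) * (\<Sum>s\<le>n. emb (gco c s (n - i)) * fps_nth G s)"
      by (simp only: 1 2)
  qed
  also have "\<dots> = (\<Sum>i\<le>n. \<Sum>r\<le>n. \<Sum>s\<le>n. emb (gco c r i * gco c s (n - i)) * (fps_nth F r * fps_nth G s))"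
  proof -
    have "emb x * a * (emb y * b) = emb (x * y) * (a * b)" for x y and a b :: 'a
    proof -
      have "emb x * a * (emb y * b) = emb x * (a * emb y) * b" by (simp add: mult.assoc)
      also have "a * emb y = emb y * a" by (simp add: calg_comm[OF E])
      finally show ?thesis by (simp add: mult.assoc calg_mult[OF E])
    qed
    thus ?thesis by (simp add: sum_product)
  qed
  also have "\<dots> = (\<Sum>r\<le>n. \<Sum>i\<le>n. \<Sum>s\<le>n. emb (gco c r i * gco c s (n - i)) * (fps_nth F r * fps_nth G s))"
    by (rule sum.swap)
  also have "\<dots> = (\<Sum>r\<le>n. \<Sum>s\<le>n. \<Sum>i\<le>n. emb (gco c r i * gco c s (n - i)) * (fps_nth F r * fps_nth G s))"
    by (rule sum.cong[OF refl], rule sum.swap)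
  also have "\<dots> = (\<Sum>r\<le>n. \<Sum>s\<le>n. h r s)"
    by (simp add: h_def sum_distrib_right[symmetric] calg_sum[OF E, symmetric] gco_vand)
  also have "\<dots> = (\<Sum>(r, s)\<in>{..n} \<times> {..n}. h r s)"
    by (simp add: sum.cartesian_product)
  also have "\<dots> = (\<Sum>(r, s)\<in>{(r, s). r + s \<le> n}. h r s)"
  proof (rule sum.mono_neutral_right)
    show "\<forall>x\<in>{..n} \<times> {..n} - {(r, s). r + s \<le> n}. (case x of (r, s) \<Rightarrow> h r s) = 0"
    proof
      fix x assume "x \<in> {..n} \<times> {..n} - {(r, s). r + s \<le> n}"
      then obtain r s where x: "x = (r, s)" "n < r + s" by auto
      thus "(case x of (r, s) \<Rightarrow> h r s) = 0" by (simp add: h_def gco_gt calg_zero[OF E])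
    qed
  qed auto
  finally show "fps_nth (Sh emb c (F * G)) n = fps_nth (Sh emb c F * Sh emb c G) n" using L by simp
qed

section \<open>Substitution v = u + c in two-variable series\<close>

definition Tset :: "nat \<Rightarrow> (int \<times> int) set" where
  "Tset n = {p. -2 \<le> fst p \<and> -2 \<le> snd p \<and> fst p + snd p \<le> int n}"

lemma finite_Tset: "finite (Tset n)"
proof (rule finite_subset)
  show "Tset n \<subseteq> {-2..int n + 2} \<times> {-2..int n + 2}" by (auto simp: Tset_def)
qed simp

definition co :: "complex \<Rightarrow> int \<Rightarrow> nat \<Rightarrow> complex" where
  "co c b k = (of_int (- b) gchoose k) * c ^ k"

definition ev :: "(complex \<Rightarrow> 'a::ring_1) \<Rightarrow> complex \<Rightarrow> (int \<Rightarrow> int \<Rightarrow> 'a) \<Rightarrow> nat \<Rightarrow> 'a" where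
  "ev emb c H n = (\<Sum>p\<in>Tset n. emb (co c (snd p) (nat (int n - fst p - snd p))) * H (fst p) (snd p))"

definition supp1 :: "(int \<Rightarrow> int \<Rightarrow> 'a::zero) \<Rightarrow> bool" where
  "supp1 H \<longleftrightarrow> (\<forall>a b. (a < -1 \<or> b < -1) \<longrightarrow> H a b = 0)"

definition supp0 :: "(int \<Rightarrow> int \<Rightarrow> 'a::zero) \<Rightarrow> bool" where
  "supp0 H \<longleftrightarrow> (\<forall>a b. (a < 0 \<or> b < 0) \<longrightarrow> H a b = 0)"

lemma supp0_supp1: "supp0 H \<Longrightarrow> supp1 H" by (simp add: supp0_def supp1_def)

lemma supp1_Wop: "supp0 H \<Longrightarrow> supp1 (Wop H)" by (simp add: supp0_def supp1_def Wop_def)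

lemma supp0_X12: "supp0 (X12 t i k j l)" by (simp add: supp0_def X12_def)
lemma supp0_X21: "supp0 (X21 t i k j l)" by (simp add: supp0_def X21_def)
lemma supp0_sumX12: "supp0 (\<lambda>a b. \<Sum>m\<in>idx. X12 t m (- m) j l a b)" by (simp add: supp0_def X12_def)
lemma supp0_sumX21: "supp0 (\<lambda>a b. \<Sum>m\<in>idx. X21 t i k m (- m) a b)" by (simp add: supp0_def X21_def)

lemma ev_add: "is_calg emb \<Longrightarrow> ev emb c (add2 H G) n = ev emb c H n + ev emb c G n"
  by (simp add: ev_def add2_def distrib_left sum.distrib)

lemma ev_sub: "is_calg emb \<Longrightarrow> ev emb c (sub2 H G) n = ev emb c H n - ev emb c G n"
  by (simp add: ev_def sub2_def right_diff_distrib sum_subtractf)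

lemma ev_zero: "ev emb c (\<lambda>a b. 0) n = 0"
  by (simp add: ev_def)

lemma ev_scal:
  assumes E: "is_calg emb"
  shows "ev emb c (scal emb d H) n = emb d * ev emb c H n"
proof -
  have "emb x * (emb d * y) = emb d * (emb x * y)" for x y
    by (simp add: calg_mult_assoc[OF E] mult.commute)
  thus ?thesis by (simp add: ev_def scal_def sum_distrib_left)
qed

lemma co_diff:
  "co c b (Suc k) - co c (b - 1) (Suc k) = - c * co c b k"
proof -
  have h: "(of_int (- (b - 1)) :: complex) = of_int (- b) + 1" by simp
  have "co c (b - 1) (Suc k) = ((of_int (- b) + 1) gchoose Suc k) * c ^ Suc k"
    unfolding co_def by (simp only: h)
  also have "\<dots> = ((of_int (- b) gchoose k) + (of_int (- b) gchoose Suc k)) * c ^ Suc k"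
    by (simp only: gbinomial_Suc_Suc)
  finally show ?thesis by (simp add: co_def algebra_simps)
qed

lemma ev_Wop:
  assumes E: "is_calg emb" and S: "supp1 H"
  shows "ev emb c (Wop H) n = emb (- c) * ev emb c H n"
proof -
  define K where "K = (\<lambda>m b p. emb (co c b (nat (int m - fst p - snd p))) * H (fst p) (snd p))"
  have S1: "(\<Sum>p\<in>Tset n. emb (co c (snd p) (nat (int n - fst p - snd p))) * H (fst p + 1) (snd p))
      = (\<Sum>p\<in>Tset (Suc n). K (Suc n) (snd p) p)"
  proof -
    have "(\<Sum>p\<in>Tset n. emb (co c (snd p) (nat (int n - fst p - snd p))) * H (fst p + 1) (snd p))
        = (\<Sum>p\<in>{p. -1 \<le> fst p \<and> -2 \<le> snd p \<and> fst p + snd p \<le> int (Suc n)}. K (Suc n) (snd p) p)"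
      by (rule sum.reindex_bij_witness[where j = "\<lambda>p. (fst p + 1, snd p)" and i = "\<lambda>p. (fst p - 1, snd p)"])
         (auto simp: Tset_def K_def)
    also have "\<dots> = (\<Sum>p\<in>Tset (Suc n). K (Suc n) (snd p) p)"
    proof (rule sum.mono_neutral_left[OF finite_Tset])
      show "\<forall>p\<in>Tset (Suc n) - {p. -1 \<le> fst p \<and> -2 \<le> snd p \<and> fst p + snd p \<le> int (Suc n)}. K (Suc n) (snd p) p = 0"
      proof
        fix p assume "p \<in> Tset (Suc n) - {p. -1 \<le> fst p \<and> -2 \<le> snd p \<and> fst p + snd p \<le> int (Suc n)}"
        hence "fst p < -1" by (auto simp: Tset_def)
        thus "K (Suc n) (snd p) p = 0" using S by (simp add: K_def supp1_def)
      qed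
    qed (auto simp: Tset_def)
    finally show ?thesis .
  qed
  have S2: "(\<Sum>p\<in>Tset n. emb (co c (snd p) (nat (int n - fst p - snd p))) * H (fst p) (snd p + 1))
      = (\<Sum>p\<in>Tset (Suc n). K (Suc n) (snd p - 1) p)"
  proof -
    have "(\<Sum>p\<in>Tset n. emb (co c (snd p) (nat (int n - fst p - snd p))) * H (fst p) (snd p + 1))
        = (\<Sum>p\<in>{p. -2 \<le> fst p \<and> -1 \<le> snd p \<and> fst p + snd p \<le> int (Suc n)}. K (Suc n) (snd p - 1) p)"
      by (rule sum.reindex_bij_witness[where j = "\<lambda>p. (fst p, snd p + 1)" and i = "\<lambda>p. (fst p, snd p - 1)"])
         (auto simp: Tset_def K_def algebra_simps)
    also have "\<dots> = (\<Sum>p\<in>Tset (Suc n). K (Suc n) (snd p - 1) p)"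
    proof (rule sum.mono_neutral_left[OF finite_Tset])
      show "\<forall>p\<in>Tset (Suc n) - {p. -2 \<le> fst p \<and> -1 \<le> snd p \<and> fst p + snd p \<le> int (Suc n)}. K (Suc n) (snd p - 1) p = 0"
      proof
        fix p assume "p \<in> Tset (Suc n) - {p. -2 \<le> fst p \<and> -1 \<le> snd p \<and> fst p + snd p \<le> int (Suc n)}"
        hence "snd p < -1" by (auto simp: Tset_def)
        thus "K (Suc n) (snd p - 1) p = 0" using S by (simp add: K_def supp1_def)
      qed
    qed (auto simp: Tset_def)
    finally show ?thesis .
  qed
  have "ev emb c (Wop H) n = (\<Sum>p\<in>Tset (Suc n). K (Suc n) (snd p) p) - (\<Sum>p\<in>Tset (Suc n). K (Suc n) (snd p - 1) p)"
    unfolding ev_def Wop_def S1[symmetric] S2[symmetric]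
    by (simp add: right_diff_distrib sum_subtractf)
  also have "\<dots> = (\<Sum>p\<in>Tset (Suc n). K (Suc n) (snd p) p - K (Suc n) (snd p - 1) p)"
    by (simp add: sum_subtractf)
  also have "\<dots> = (\<Sum>p\<in>Tset n. K (Suc n) (snd p) p - K (Suc n) (snd p - 1) p)"
  proof (rule sum.mono_neutral_right[OF finite_Tset])
    show "Tset n \<subseteq> Tset (Suc n)" by (auto simp: Tset_def)
    show "\<forall>p\<in>Tset (Suc n) - Tset n. K (Suc n) (snd p) p - K (Suc n) (snd p - 1) p = 0"
    proof
      fix p assume "p \<in> Tset (Suc n) - Tset n"
      hence "nat (int (Suc n) - fst p - snd p) = 0" by (auto simp: Tset_def)
      thus "K (Suc n) (snd p) p - K (Suc n) (snd p - 1) p = 0" by (simp add: K_def co_def)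
    qed
  qed
  also have "\<dots> = (\<Sum>p\<in>Tset n. emb (- c) * (emb (co c (snd p) (nat (int n - fst p - snd p))) * H (fst p) (snd p)))"
  proof (rule sum.cong[OF refl])
    fix p assume "p \<in> Tset n"
    hence e: "nat (int (Suc n) - fst p - snd p) = Suc (nat (int n - fst p - snd p))" by (auto simp: Tset_def)
    show "K (Suc n) (snd p) p - K (Suc n) (snd p - 1) p = emb (- c) * (emb (co c (snd p) (nat (int n - fst p - snd p))) * H (fst p) (snd p))"
      unfolding K_def e
      by (simp add: left_diff_distrib[symmetric] calg_diff[OF E, symmetric] co_diff calg_mult_assoc[OF E])
  qed
  also have "\<dots> = emb (- c) * ev emb c H n"
    by (simp add: ev_def sum_distrib_left)
  finally show ?thesis .
qed

lemma ev_prod_gen: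
  assumes E: "is_calg emb"
  shows "ev emb c (\<lambda>a b. if 0 \<le> a \<and> 0 \<le> b then P (nat a) (nat b) else 0) n
       = (\<Sum>i\<le>n. \<Sum>r\<le>n - i. emb (gco c r (n - i)) * P i r)"
proof -
  let ?X = "\<lambda>a b. if 0 \<le> a \<and> 0 \<le> b then P (nat a) (nat b) else 0"
  have "ev emb c ?X n = (\<Sum>p\<in>{p. 0 \<le> fst p \<and> 0 \<le> snd p \<and> fst p + snd p \<le> int n}.
           emb (co c (snd p) (nat (int n - fst p - snd p))) * P (nat (fst p)) (nat (snd p)))"
    unfolding ev_def
    by (rule sum.mono_neutral_cong_right[OF finite_Tset]) (auto simp: Tset_def)
  also have "\<dots> = (\<Sum>q\<in>Sigma {..n} (\<lambda>i. {..n - i}). emb (gco c (snd q) (n - fst q)) * P (fst q) (snd q))"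
  proof (rule sum.reindex_bij_witness[where i = "\<lambda>q. (int (fst q), int (snd q))" and j = "\<lambda>p. (nat (fst p), nat (snd p))"])
    fix p :: "int \<times> int" assume p: "p \<in> {p. 0 \<le> fst p \<and> 0 \<le> snd p \<and> fst p + snd p \<le> int n}"
    hence le: "0 \<le> fst p" "0 \<le> snd p" "fst p + snd p \<le> int n" by auto
    have 1: "n - nat (fst p) = nat (int n - fst p)" using le by auto
    have 2: "nat (int n - fst p - snd p) = nat (int n - fst p) - nat (snd p)" using le by auto
    have 3: "of_int (- snd p) = (- of_nat (nat (snd p)) :: complex)" using le by simp
    have 4: "nat (snd p) \<le> nat (int n - fst p)" using le by auto
    show "emb (gco c (snd (nat (fst p), nat (snd p))) (n - fst (nat (fst p), nat (snd p)))) * P (fst (nat (fst p), nat (snd p))) (snd (nat (fst p), nat (snd p)))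
        = emb (co c (snd p) (nat (int n - fst p - snd p))) * P (nat (fst p)) (nat (snd p))"
      using le by (simp add: co_def gco_def 1 2 3 4)
  qed auto
  also have "\<dots> = (\<Sum>i\<le>n. \<Sum>r\<le>n - i. emb (gco c r (n - i)) * P i r)"
    by (simp add: sum.Sigma split_beta)
  finally show ?thesis .
qed

lemma ev_X12_gen:
  assumes E: "is_calg emb"
  shows "ev emb c (\<lambda>a b. if 0 \<le> a \<and> 0 \<le> b then F (nat a) * G (nat b) else 0) n
       = fps_nth (Abs_fps F * Sh emb c (Abs_fps G)) n"
proof -
  have "fps_nth (Abs_fps F * Sh emb c (Abs_fps G)) n = (\<Sum>i\<le>n. F i * (\<Sum>r\<le>n - i. emb (gco c r (n - i)) * G r))"
    by (simp add: fps_mult_nth atLeast0AtMost Sh_nth[OF E])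
  also have "\<dots> = (\<Sum>i\<le>n. \<Sum>r\<le>n - i. emb (gco c r (n - i)) * (F i * G r))"
    by (simp add: sum_distrib_left calg_comm2[OF E])
  finally show ?thesis using ev_prod_gen[OF E, of c "\<lambda>i r. F i * G r"] by simp
qed

lemma ev_X21_gen:
  assumes E: "is_calg emb"
  shows "ev emb c (\<lambda>a b. if 0 \<le> a \<and> 0 \<le> b then G (nat b) * F (nat a) else 0) n
       = fps_nth (Sh emb c (Abs_fps G) * Abs_fps F) n"
proof -
  have "fps_nth (Sh emb c (Abs_fps G) * Abs_fps F) n = (\<Sum>j=0..n. (\<Sum>r\<le>j. emb (gco c r j) * G r) * F (n - j))"
    by (simp add: fps_mult_nth Sh_nth[OF E])
  also have "\<dots> = (\<Sum>i=0..n. (\<Sum>r\<le>n - i. emb (gco c r (n - i)) * G r) * F (n - (n - i)))"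
    by (subst sum.atLeastAtMost_rev) simp
  also have "\<dots> = (\<Sum>i\<le>n. \<Sum>r\<le>n - i. emb (gco c r (n - i)) * (G r * F i))"
    by (auto simp: atLeast0AtMost sum_distrib_right mult.assoc intro!: sum.cong)
  finally show ?thesis using ev_prod_gen[OF E, of c "\<lambda>i r. G r * F i"] by simp
qed

lemma ev_X12:
  assumes E: "is_calg emb"
  shows "ev emb c (X12 t i k j l) n = fps_nth (Abs_fps (tser t i j) * Sh emb c (Abs_fps (tser t k l))) n"
  unfolding X12_def by (rule ev_X12_gen[OF E])

lemma ev_X21:
  assumes E: "is_calg emb"
  shows "ev emb c (X21 t i k j l) n = fps_nth (Sh emb c (Abs_fps (tser t k l)) * Abs_fps (tser t i j)) n"
  unfolding X21_def by (rule ev_X21_gen[OF E])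

lemma ev_sumX21:
  assumes E: "is_calg emb"
  shows "ev emb c (\<lambda>a b. \<Sum>m\<in>idx. X21 t i k m (- m) a b) n
      = fps_nth (\<Sum>m\<in>idx. Sh emb c (Abs_fps (tser t k (- m))) * Abs_fps (tser t i m)) n"
  by (simp add: ev_def sum_distrib_left fps_sum_nth ev_X21[OF E, symmetric] sum.swap[of _ idx])

lemma numeral_comm_right: "(x :: 'b::ring_1) * (numeral k * y) = numeral k * (x * y)"
proof -
  have "x * (numeral k * y) = (x * numeral k) * y" by (simp only: mult.assoc)
  also have "x * numeral k = numeral k * x" by (rule numeral_comm[symmetric])
  finally show ?thesis by (simp only: mult.assoc)
qed

lemma sprod_abs: "Abs_fps (sprod F G) = Abs_fps F * Abs_fps G"
  by (rule fps_ext) (simp add: sprod_fps)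

lemma sshift_abs: "Abs_fps (sshift emb c F) = Sh emb c (Abs_fps F)"
proof -
  have "fps_nth (Abs_fps F) = F" by (rule ext) simp
  thus ?thesis by (simp add: Sh_def)
qed

lemma ev_if: "ev emb c (if b then F else G) n = (if b then ev emb c F n else ev emb c G n)"
  by simp

lemma idx_sum: "(\<Sum>m\<in>idx. f m) = f (-1) + f 0 + f 1"
  by (simp add: idx_def add.assoc)

lemma lhs_coef:
  assumes E: "is_calg emb"
  shows "emb (- (1/2)) * (emb (- (1/2)) * x) - emb (1/2) * (emb (- (1/2)) * x) - emb (- (1/2)) * x + emb (1/2) * x
       = emb (3/2) * x"
proof -
  have "emb (- (1/2)) * (emb (- (1/2)) * x) - emb (1/2) * (emb (- (1/2)) * x) - emb (- (1/2)) * x + emb (1/2) * x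
      = (emb (1/4) - emb (-1/4) - emb (- (1/2)) + emb (1/2)) * x"
    by (simp add: calg_mult_assoc[OF E] algebra_simps)
  also have "emb (1/4) - emb (-1/4) - emb (- (1/2)) + emb (1/2) = emb (3/2)"
    by (simp add: calg_diff[OF E, symmetric] calg_add[OF E, symmetric])
  finally show ?thesis .
qed

lemma rhs_coef:
  assumes E: "is_calg emb"
  shows "emb (- (1/2)) * (emb (- (1/2)) * x) - emb (1/2) * (emb (- (1/2)) * x) - emb (- (1/2)) * y + emb (1/2) * y
       = emb (1/2) * x + y"
proof -
  have "emb (- (1/2)) * (emb (- (1/2)) * x) - emb (1/2) * (emb (- (1/2)) * x) - emb (- (1/2)) * y + emb (1/2) * y
      = (emb (1/4) - emb (-1/4)) * x + (emb (1/2) - emb (- (1/2))) * y"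
    by (simp add: calg_mult_assoc[OF E] algebra_simps)
  also have "emb (1/4) - emb (-1/4) = emb (1/2)"
    by (simp add: calg_diff[OF E, symmetric])
  also have "emb (1/2) - emb (- (1/2)) = 1"
    by (simp add: calg_diff[OF E, symmetric] calg_one[OF E])
  finally show ?thesis by simp
qed

lemma rtt_row:
  assumes E: "is_calg emb" and R: "RTT_rel emb t" and j: "j \<in> idx" and l: "l \<in> idx"
  shows "3 * (Abs_fps (tser t (-1) j) * Sh emb (1/2) (Abs_fps (tser t (-1) l)))
       = Sh emb (1/2) (Abs_fps (tser t (-1) l)) * Abs_fps (tser t (-1) j)
         + 2 * (Sh emb (1/2) (Abs_fps (tser t (-1) j)) * Abs_fps (tser t (-1) l))
         - (if l = - j then (\<Sum>m\<in>idx. Sh emb (1/2) (Abs_fps (tser t (-1) (- m))) * Abs_fps (tser t (-1) m)) else 0)"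
    (is "3 * ?X = ?Y1 + 2 * ?Y2 - ?Z")
proof (rule fps_ext)
  fix n
  have m1: "(-1::int) \<in> idx" by (simp add: idx_def)
  have "RTT_lhs emb t (-1) (-1) j l = RTT_rhs emb t (-1) (-1) j l"
    using R m1 j l unfolding RTT_rel_def by (intro ext) blast
  hence eq: "ev emb (1/2) (RTT_lhs emb t (-1) (-1) j l) n = ev emb (1/2) (RTT_rhs emb t (-1) (-1) j l) n"
    by simp
  have L: "ev emb (1/2) (RTT_lhs emb t (-1) (-1) j l) n = emb (3/2) * fps_nth ?X n"
    unfolding RTT_lhs_def
    by (simp add: ev_add[OF E] ev_sub[OF E] ev_scal[OF E] ev_Wop[OF E] ev_X12[OF E] ev_zero
        supp1_Wop supp0_X12 supp0_supp1 lhs_coef[OF E])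
  have "ev emb (1/2) (RTT_rhs emb t (-1) (-1) j l) n
      = emb (1/2) * fps_nth ?Y1 n + fps_nth ?Y2 n
        + (if l = - j then emb (- (1/2)) * fps_nth (\<Sum>m\<in>idx. Sh emb (1/2) (Abs_fps (tser t (-1) (- m))) * Abs_fps (tser t (-1) m)) n else 0)"
    unfolding RTT_rhs_def
    by (simp add: ev_add[OF E] ev_sub[OF E] ev_scal[OF E] ev_Wop[OF E] ev_X21[OF E] ev_zero ev_sumX21[OF E] ev_if
        supp1_Wop supp0_X21 supp0_sumX21 supp0_supp1 rhs_coef[OF E])
  with eq L have main: "emb (3/2) * fps_nth ?X n = emb (1/2) * fps_nth ?Y1 n + fps_nth ?Y2 n
        + (if l = - j then emb (- (1/2)) * fps_nth (\<Sum>m\<in>idx. Sh emb (1/2) (Abs_fps (tser t (-1) (- m))) * Abs_fps (tser t (-1) m)) n else 0)"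
    by simp
  have two: "2 * (emb x * z) = emb (2 * x) * z" for x z
    using calg_mult[OF E, of 2 x] calg_numeral[OF E, of "num.Bit0 num.One"] by (simp add: mult.assoc)
  have "3 * fps_nth ?X n = 2 * (emb (3/2) * fps_nth ?X n)"
    by (simp add: two calg_numeral[OF E])
  also have "\<dots> = fps_nth ?Y1 n + 2 * fps_nth ?Y2 n - fps_nth ?Z n"
    unfolding main by (simp add: distrib_left two calg_one[OF E] calg_uminus[OF E])
  finally show "fps_nth (3 * ?X) n = fps_nth (?Y1 + 2 * ?Y2 - ?Z) n"
    by (simp add: fps_numeral_fps_const)
qed

lemma unit_row:
  assumes E: "is_calg emb" and U: "unitary_rel emb t"
  shows "(\<Sum>k\<in>idx. Abs_fps (tser t (-1) k) * Sh emb (1/2) (Abs_fps (tser t (-1) (- k)))) = 0"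
proof (rule fps_ext)
  fix n
  have m1: "(-1::int) \<in> idx" "(1::int) \<in> idx" by (simp_all add: idx_def)
  have "(\<Sum>k\<in>idx. sprod (tser t (-1) k) (sshift emb (1/2) (tser t (- 1) (- k))) n) = 0"
    using U m1 unfolding unitary_rel_def by fastforce
  thus "fps_nth (\<Sum>k\<in>idx. Abs_fps (tser t (-1) k) * Sh emb (1/2) (Abs_fps (tser t (-1) (- k)))) n = fps_nth 0 n"
    by (simp add: sprod_fps sshift_abs fps_sum_nth)
qed

lemma gauss_row:
  assumes G: "gauss_decomp t kk ee ff"
  shows "Abs_fps (tser t (-1) (-1)) = Abs_fps (kk (-1))"
    and "Abs_fps (tser t (-1) 0) = Abs_fps (kk (-1)) * Abs_fps (ee (-1) 0)"
    and "Abs_fps (tser t (-1) 1) = Abs_fps (kk (-1)) * Abs_fps (ee (-1) 1)"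
proof -
  have m: "(-1::int) \<in> idx" "(0::int) \<in> idx" "(1::int) \<in> idx" by (simp_all add: idx_def)
  have T: "\<And>j n. j \<in> idx \<Longrightarrow> tser t (-1) j n = (\<Sum>m\<in>idx.
           sprod (sprod (if m = -1 then sone else if m < -1 then ff (-1) m else (\<lambda>_. 0)) (kk m))
                 (if m = j then sone else if m < j then ee m j else (\<lambda>_. 0)) n)"
    using G m unfolding gauss_decomp_def by blast
  have T': "Abs_fps (tser t (-1) j) = (\<Sum>m\<in>idx.
           Abs_fps (if m = -1 then sone else if m < -1 then ff (-1) m else (\<lambda>_. 0)) * Abs_fps (kk m)
                 * Abs_fps (if m = j then sone else if m < j then ee m j else (\<lambda>_. 0)))" if "j \<in> idx" for j
    by (rule fps_ext) (simp add: T[OF that] fps_sum_nth sprod_fps sprod_abs)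
  show "Abs_fps (tser t (-1) (-1)) = Abs_fps (kk (-1))"
    using T'[OF m(1)] by (simp add: idx_sum sone_fps zero_fps)
  show "Abs_fps (tser t (-1) 0) = Abs_fps (kk (-1)) * Abs_fps (ee (-1) 0)"
    using T'[OF m(2)] by (simp add: idx_sum sone_fps zero_fps)
  show "Abs_fps (tser t (-1) 1) = Abs_fps (kk (-1)) * Abs_fps (ee (-1) 1)"
    using T'[OF m(3)] by (simp add: idx_sum sone_fps zero_fps)
qed

lemmas nexp = numeral_Bit0 numeral_Bit1 numeral_One distrib_left distrib_right mult_1 mult_1_right

lemma sshift_nth: "sshift emb c F n = fps_nth (Sh emb c (Abs_fps F)) n"
  by (simp add: sshift_abs[symmetric])

theorem lemma3p8:
  fixes emb :: "complex \<Rightarrow> 'a::ring_1"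
    and t :: "int \<Rightarrow> int \<Rightarrow> nat \<Rightarrow> 'a"
    and kk :: "int \<Rightarrow> nat \<Rightarrow> 'a"
    and ee ff :: "int \<Rightarrow> int \<Rightarrow> nat \<Rightarrow> 'a"
  assumes "is_calg emb"
    and "RTT_rel emb t"
    and "unitary_rel emb t"
    and "gauss_decomp t kk ee ff"
  shows "\<forall>n. 3 * sshift emb (1/2) (ee (-1) 1) n - ee (-1) 1 n
            + 3 * sprod (sshift emb (1/2) (ee (-1) 0)) (ee (-1) 0) n
            - 2 * sprod (ee (-1) 0) (ee (-1) 0) n = 0"
proof -
  note E = assms(1) and R = assms(2) and U = assms(3) and G = assms(4)
  define K where "K = Abs_fps (kk (-1))"
  define A where "A = Abs_fps (ee (-1) 0)"
  define B where "B = Abs_fps (ee (-1) 1)"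
  define Kp where "Kp = Sh emb (1/2) K"
  define Ap where "Ap = Sh emb (1/2) A"
  define Bp where "Bp = Sh emb (1/2) B"
  have m: "(-1::int) \<in> idx" "(0::int) \<in> idx" "(1::int) \<in> idx" by (simp_all add: idx_def)
  have g: "Abs_fps (tser t (-1) (-1)) = K" "Abs_fps (tser t (-1) 0) = K * A" "Abs_fps (tser t (-1) 1) = K * B"
    using gauss_row[OF G] by (simp_all add: K_def A_def B_def)
  have s: "Sh emb (1/2) K = Kp" "Sh emb (1/2) (K * A) = Kp * Ap" "Sh emb (1/2) (K * B) = Kp * Bp"
    by (simp_all add: Kp_def Ap_def Bp_def Sh_mult[OF E])
  have K0: "fps_nth K 0 = 1" using G m by (simp add: K_def gauss_decomp_def)
  have Kp0: "fps_nth Kp 0 = 1" using K0 by (simp add: Kp_def Sh_nth0)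
  define Sig where "Sig = Kp * (Bp * K) + Kp * (Ap * (K * A)) + Kp * (K * B)"
  have R11: "3 * (K * Kp) = Kp * K + 2 * (Kp * K)"
    using rtt_row[OF E R m(1) m(1)] by (simp add: g s)
  have R10: "3 * (K * (Kp * Ap)) = Kp * (Ap * K) + 2 * (Kp * (K * A))"
    using rtt_row[OF E R m(1) m(2)] by (simp add: g s mult.assoc)
  have R01: "3 * (K * (A * Kp)) = Kp * (K * A) + 2 * (Kp * (Ap * K))"
    using rtt_row[OF E R m(2) m(1)] by (simp add: g s mult.assoc)
  have R00: "3 * (K * (A * (Kp * Ap))) = Kp * (Ap * (K * A)) + 2 * (Kp * (Ap * (K * A))) - Sig"
    using rtt_row[OF E R m(2) m(2)] by (simp add: g s mult.assoc idx_sum Sig_def)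
  have R1m: "3 * (K * (Kp * Bp)) = Kp * (Bp * K) + 2 * (Kp * (K * B)) - Sig"
    using rtt_row[OF E R m(1) m(3)] by (simp add: g s mult.assoc idx_sum Sig_def)
  have Rm1: "3 * (K * (B * Kp)) = Kp * (K * B) + 2 * (Kp * (Bp * K)) - Sig"
    using rtt_row[OF E R m(3) m(1)] by (simp add: g s mult.assoc idx_sum Sig_def)
  have UU: "K * (Kp * Bp) + K * (A * (Kp * Ap)) + K * (B * Kp) = 0"
    using unit_row[OF E U] by (simp add: g s mult.assoc idx_sum)
  have c1: "K * Kp = Kp * K"
  proof (rule fps_cancel_three[OF E])
    have "Kp * K + 2 * (Kp * K) = 3 * (Kp * K)" by (simp only: nexp; (simp add: algebra_simps)?)
    with R11 show "3 * (K * Kp) = 3 * (Kp * K)" by simp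
  qed
  have c1': "Kp * (K * X) = K * (Kp * X)" for X
    by (simp add: mult.assoc[symmetric] c1)
  have c2: "Kp * (Ap * K) = K * (Kp * (3 * Ap - 2 * A))"
  proof -
    have "Kp * (Ap * K) = 3 * (K * (Kp * Ap)) - 2 * (Kp * (K * A))" by (simp add: R10)
    also have "\<dots> = 3 * (K * (Kp * Ap)) - 2 * (K * (Kp * A))" by (simp add: c1')
    also have "\<dots> = K * (Kp * (3 * Ap - 2 * A))" by (simp only: nexp; (simp add: algebra_simps)?)
    finally show ?thesis .
  qed
  have c3: "A * Kp = Kp * (2 * Ap - A)"
  proof (rule fps_cancel_three[OF E])
    show "3 * (A * Kp) = 3 * (Kp * (2 * Ap - A))"
    proof (rule fps_cancel_left_eq[OF K0])
      have "K * (3 * (A * Kp)) = 3 * (K * (A * Kp))" by (simp only: nexp; (simp add: algebra_simps)?)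
      also have "\<dots> = Kp * (K * A) + 2 * (Kp * (Ap * K))" by (rule R01)
      also have "\<dots> = K * (Kp * A) + 2 * (K * (Kp * (3 * Ap - 2 * A)))" by (simp add: c1' c2)
      also have "\<dots> = K * (3 * (Kp * (2 * Ap - A)))" by (simp only: nexp; (simp add: algebra_simps)?)
      finally show "K * (3 * (A * Kp)) = K * (3 * (Kp * (2 * Ap - A)))" .
    qed
  qed
  have e1: "Kp * (Ap * (K * A)) = K * (Kp * ((3 * Ap - 2 * A) * A))"
  proof -
    have "Kp * (Ap * (K * A)) = (Kp * (Ap * K)) * A" by (simp only: mult.assoc)
    also have "\<dots> = K * (Kp * ((3 * Ap - 2 * A) * A))" by (simp only: c2 mult.assoc)
    finally show ?thesis .
  qed
  have e2: "K * (A * (Kp * Ap)) = K * (Kp * ((2 * Ap - A) * Ap))"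
  proof -
    have "K * (A * (Kp * Ap)) = K * ((A * Kp) * Ap)" by (simp only: mult.assoc)
    also have "\<dots> = K * (Kp * ((2 * Ap - A) * Ap))" by (simp only: c3 mult.assoc)
    finally show ?thesis .
  qed
  have c4: "Sig = K * (Kp * (9 * (Ap * A) - 6 * (A * A) - 6 * (Ap * Ap) + 3 * (A * Ap)))"
  proof -
    have "Sig = Kp * (Ap * (K * A)) + 2 * (Kp * (Ap * (K * A))) - 3 * (K * (A * (Kp * Ap)))"
      by (simp add: R00)
    also have "\<dots> = K * (Kp * ((3 * Ap - 2 * A) * A)) + 2 * (K * (Kp * ((3 * Ap - 2 * A) * A)))
                    - 3 * (K * (Kp * ((2 * Ap - A) * Ap)))"
      by (simp only: e1 e2)
    also have "\<dots> = K * (Kp * (9 * (Ap * A) - 6 * (A * A) - 6 * (Ap * Ap) + 3 * (A * Ap)))"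
      by (simp only: nexp; (simp add: algebra_simps)?)
    finally show ?thesis .
  qed
  have c5: "Kp * (Bp * K) = 3 * (K * (Kp * Bp)) - 2 * (K * (Kp * B)) + Sig"
  proof -
    have "Kp * (Bp * K) = 3 * (K * (Kp * Bp)) - 2 * (Kp * (K * B)) + Sig" by (simp add: R1m)
    thus ?thesis by (simp add: c1')
  qed
  have c6: "B * Kp = Kp * (2 * Bp - B + 3 * (Ap * A) - 2 * (A * A) - 2 * (Ap * Ap) + A * Ap)"
  proof (rule fps_cancel_three[OF E])
    show "3 * (B * Kp) = 3 * (Kp * (2 * Bp - B + 3 * (Ap * A) - 2 * (A * A) - 2 * (Ap * Ap) + A * Ap))"
    proof (rule fps_cancel_left_eq[OF K0])
      have "K * (3 * (B * Kp)) = 3 * (K * (B * Kp))" by (simp only: nexp; (simp add: algebra_simps)?)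
      also have "\<dots> = Kp * (K * B) + 2 * (Kp * (Bp * K)) - Sig" by (rule Rm1)
      also have "\<dots> = K * (Kp * B) + 2 * (3 * (K * (Kp * Bp)) - 2 * (K * (Kp * B)) + Sig) - Sig"
        by (simp only: c1' c5)
      also have "\<dots> = K * (Kp * B) + 2 * (3 * (K * (Kp * Bp)) - 2 * (K * (Kp * B))
          + K * (Kp * (9 * (Ap * A) - 6 * (A * A) - 6 * (Ap * Ap) + 3 * (A * Ap))))
          - K * (Kp * (9 * (Ap * A) - 6 * (A * A) - 6 * (Ap * Ap) + 3 * (A * Ap)))"
        by (simp only: c4)
      also have "\<dots> = K * (3 * (Kp * (2 * Bp - B + 3 * (Ap * A) - 2 * (A * A) - 2 * (Ap * Ap) + A * Ap)))"
        by (simp only: nexp; (simp add: algebra_simps)?)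
      finally show "K * (3 * (B * Kp)) = K * (3 * (Kp * (2 * Bp - B + 3 * (Ap * A) - 2 * (A * A) - 2 * (Ap * Ap) + A * Ap)))" .
    qed
  qed
  have fin: "3 * Bp - B + 3 * (Ap * A) - 2 * (A * A) = 0"
  proof (rule fps_cancel_left[OF Kp0])
    show "Kp * (3 * Bp - B + 3 * (Ap * A) - 2 * (A * A)) = 0"
    proof (rule fps_cancel_left[OF K0])
      have "K * (Kp * (3 * Bp - B + 3 * (Ap * A) - 2 * (A * A)))
          = K * (Kp * Bp) + K * (Kp * ((2 * Ap - A) * Ap))
            + K * (Kp * (2 * Bp - B + 3 * (Ap * A) - 2 * (A * A) - 2 * (Ap * Ap) + A * Ap))"
        by (simp only: nexp; (simp add: algebra_simps)?)
      also have "\<dots> = K * (Kp * Bp) + K * (A * (Kp * Ap)) + K * (B * Kp)"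
        by (simp only: e2 c6)
      also have "\<dots> = 0" by (rule UU)
      finally show "K * (Kp * (3 * Bp - B + 3 * (Ap * A) - 2 * (A * A))) = 0" .
    qed
  qed
  show ?thesis
  proof
    fix n
    have "fps_nth (3 * Bp - B + 3 * (Ap * A) - 2 * (A * A)) n = 0" by (simp add: fin)
    thus "3 * sshift emb (1/2) (ee (-1) 1) n - ee (-1) 1 n
            + 3 * sprod (sshift emb (1/2) (ee (-1) 0)) (ee (-1) 0) n
            - 2 * sprod (ee (-1) 0) (ee (-1) 0) n = 0"
      by (simp add: sshift_nth sprod_fps sshift_abs A_def B_def Ap_def Bp_def fps_numeral_fps_const)
  qed
qed

end
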